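(* Let $N\ge 2$, fix real $\Omega\neq 0$ and real $\delta$, and let $J^{(1)}=(J^{(1)}_{i,j})_{1\le i<j\le N}$ and $J^{(2)}=(J^{(2)}_{i,j})_{1\le i<j\le N}$ be real coupling families with $J^{(1)}\neq J^{(2)}$. For $k=1,2$ let $$\hat{H}_k = \Omega \sum_{i=1}^N \hat{\sigma}_i^x + \delta \sum_{i=1}^N \hat{\sigma}_i^z + \sum_{1\le i<j\le N} J^{(k)}_{i,j} \hat{\sigma}_i^z \hat{\sigma}_j^z,$$ and let $|\Psi_k\rangle$ be the (unique up to phase) ground state of $\hat H_k$. Then $|\Psi_1\rangle$ and $|\Psi_2\rangle$ are not equal (not proportional), i.e. no vector is simultaneously a ground state of $\hat H_1$ and of $\hat H_2$.
   Context: $\hat\sigma_i^x,\hat\sigma_i^z$ are Pauli matrices acting on the $i$-th factor of $(\mathbb{C}^2)^{\otimes N}$. For $\Omega\neq0$ the ground state of such a Hamiltonian is nondegenerate and has nonzero overlap with every computational basis state $|\sigma_1,\dots,\sigma_N\rangle$ (simultaneous eigenstates of all $\hat\sigma_i^z$). *)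

theory Defs
  imports Complex_Main
begin

text \<open>Hilbert space (C^2)^{\<otimes>N} realised as functions on computational basis states.
  A basis state |sigma_1,...,sigma_N> is encoded by the set s \<subseteq> {1..N} of sites i
  with sigma_i^z = -1 (spin down).\<close>

definition qvec :: "nat \<Rightarrow> (nat set \<Rightarrow> complex) set" where
  "qvec N = {\<psi>. \<forall>s. \<not> s \<subseteq> {1..N} \<longrightarrow> \<psi> s = 0}"

text \<open>Eigenvalue of sigma_i^z on basis state s.\<close>
definition zval :: "nat set \<Rightarrow> nat \<Rightarrow> real" where
  "zval s i = (if i \<in> s then -1 else 1)"

text \<open>Spin flip at site i (action of sigma_i^x on basis states).\<close>
definition flip :: "nat \<Rightarrow> nat set \<Rightarrow> nat set" where
  "flip i s = (if i \<in> s then s - {i} else insert i s)"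

text \<open>H = Omega sum_i sigma_i^x + delta sum_i sigma_i^z + sum_{i<j} J i j sigma_i^z sigma_j^z,
  acting on vectors (sigma^x is real symmetric, so (sigma_i^x psi)(s) = psi(flip i s)).\<close>
definition ham :: "nat \<Rightarrow> real \<Rightarrow> real \<Rightarrow> (nat \<Rightarrow> nat \<Rightarrow> real)
                   \<Rightarrow> (nat set \<Rightarrow> complex) \<Rightarrow> (nat set \<Rightarrow> complex)" where
  "ham N \<Omega> \<delta> J \<psi> = (\<lambda>s. if s \<subseteq> {1..N} then
      complex_of_real \<Omega> * (\<Sum>i=1..N. \<psi> (flip i s))
      + complex_of_real (\<delta> * (\<Sum>i=1..N. zval s i)
          + (\<Sum>i=1..N. \<Sum>j=i+1..N. J i j * zval s i * zval s j)) * \<psi> s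
    else 0)"

definition ground_state :: "nat \<Rightarrow> ((nat set \<Rightarrow> complex) \<Rightarrow> (nat set \<Rightarrow> complex))
                            \<Rightarrow> (nat set \<Rightarrow> complex) \<Rightarrow> bool" where
  "ground_state N H \<psi> \<longleftrightarrow> \<psi> \<in> qvec N \<and> \<psi> \<noteq> (\<lambda>_. 0) \<and>
     (\<exists>E::real. H \<psi> = (\<lambda>s. complex_of_real E * \<psi> s) \<and>
        (\<forall>\<phi>\<in>qvec N. \<forall>\<mu>::complex. \<phi> \<noteq> (\<lambda>_. 0) \<and> H \<phi> = (\<lambda>s. \<mu> * \<phi> s) \<longrightarrow> E \<le> Re \<mu>))"

end

theory Submission
  imports Defs "HOL-Analysis.Analysis"
begin

lemma coord_cont: "continuous_on S (\<lambda>x. x i::real)"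
  by (rule continuous_on_subset[OF continuous_on_product_coordinates]) simp

lemma flip_flip: "flip i (flip i s) = s" by (auto simp: flip_def)

lemma flip_Pow: "i \<in> {1..N} \<Longrightarrow> (flip i s \<in> Pow {1..N}) = (s \<in> Pow {1..N})"
  by (auto simp: flip_def)

lemma flip_bij: "i \<in> {1..N} \<Longrightarrow> bij_betw (flip i) (Pow {1..N}) (Pow {1..N})"
  by (rule bij_betw_byWitness[where f'="flip i"]) (auto simp: flip_flip flip_def split: if_splits)

lemma sum_flip:
  assumes "i \<in> {1..N}"
  shows "(\<Sum>s\<in>Pow {1..N}. g s * f (flip i s)) = (\<Sum>s\<in>Pow {1..N}. g (flip i s) * (f s::real))"
proof -
  have "(\<Sum>s\<in>Pow {1..N}. (\<lambda>s. g (flip i s) * f s) (flip i s)) = (\<Sum>s\<in>Pow {1..N}. g (flip i s) * f s)"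
    by (rule sum.reindex_bij_betw[OF flip_bij[OF assms]])
  then show ?thesis by (simp add: flip_flip)
qed

lemma quad:
  fixes a b :: real
  assumes "\<forall>t. 0 \<le> a*t + b*t^2"
  shows "a = 0"
proof (rule ccontr)
  assume a: "a \<noteq> 0"
  define t where "t = - a / ((abs b) + 1)"
  have c: "(abs b) + 1 > 0" by simp
  have "a*t + b*t^2 = (0 - a^2 * ((abs b)+1) + b*a^2) / ((abs b)+1)^2"
  proof -
    have g: "\<And>c::real. c \<noteq> 0 \<Longrightarrow> a*(-a/c) + b*(-a/c)^2 = (0 - a^2*c + b*a^2)/c^2"
      by (simp add: field_simps power2_eq_square)
    show ?thesis unfolding t_def using c by (intro g) simp
  qed
  also have "\<dots> < 0"
  proof -
    have h1: "b*a^2 \<le> (abs b)*a^2" by (simp add: mult_right_mono)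
    have h2: "a^2 > 0" using a by simp
    have h3: "a^2 * ((abs b)+1) = (abs b)*a^2 + a^2" by (simp add: algebra_simps)
    have "0 - a^2 * ((abs b)+1) + b*a^2 < 0" using h1 h2 h3 by linarith
    then show ?thesis using c by (simp add: divide_neg_pos)
  qed
  finally show False using assms by (metis not_le)
qed

context
  fixes N :: nat and \<Omega> \<delta> :: real and J :: "nat \<Rightarrow> nat \<Rightarrow> real"
begin

definition "PP = Pow {1..N}"
definition dg :: "nat set \<Rightarrow> real" where
  "dg s = \<delta> * (\<Sum>i=1..N. zval s i) + (\<Sum>i=1..N. \<Sum>j=i+1..N. J i j * zval s i * zval s j)"
definition hr :: "(nat set \<Rightarrow> real) \<Rightarrow> nat set \<Rightarrow> real" where
  "hr f s = \<Omega> * (\<Sum>i=1..N. f (flip i s)) + dg s * f s"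
definition Q :: "(nat set \<Rightarrow> real) \<Rightarrow> real" where "Q f = (\<Sum>s\<in>PP. f s * hr f s)"
definition nrm :: "(nat set \<Rightarrow> real) \<Rightarrow> real" where "nrm f = (\<Sum>s\<in>PP. (f s)^2)"

lemma hr_lin: "hr (\<lambda>s. v s + t * w s) s = hr v s + t * hr w s"
  unfolding hr_def by (simp add: sum.distrib sum_distrib_left algebra_simps)

lemma B_sym: "(\<Sum>s\<in>PP. g s * hr f s) = (\<Sum>s\<in>PP. f s * hr g s)"
proof -
  have "(\<Sum>s\<in>PP. g s * (\<Sum>i=1..N. f (flip i s))) = (\<Sum>i=1..N. \<Sum>s\<in>PP. g s * f (flip i s))"
    by (simp add: sum_distrib_left sum.swap[of _ PP])
  also have "\<dots> = (\<Sum>i=1..N. \<Sum>s\<in>PP. g (flip i s) * f s)"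
    unfolding PP_def by (rule sum.cong[OF refl]) (rule sum_flip)
  also have "\<dots> = (\<Sum>s\<in>PP. f s * (\<Sum>i=1..N. g (flip i s)))"
    by (simp add: sum_distrib_left sum.swap[of _ PP] mult.commute)
  finally have "(\<Sum>s\<in>PP. g s * (\<Sum>i=1..N. f (flip i s))) = (\<Sum>s\<in>PP. f s * (\<Sum>i=1..N. g (flip i s)))" .
  then have "\<Omega> * (\<Sum>s\<in>PP. g s * (\<Sum>i=1..N. f (flip i s))) + (\<Sum>s\<in>PP. g s * dg s * f s)
    = \<Omega> * (\<Sum>s\<in>PP. f s * (\<Sum>i=1..N. g (flip i s))) + (\<Sum>s\<in>PP. f s * dg s * g s)"
    by (simp add: mult.commute mult.left_commute)
  then show ?thesis unfolding hr_def
    by (simp add: distrib_left sum.distrib sum_distrib_left mult_ac)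
qed

lemma Q_expand: "Q (\<lambda>s. v s + t * w s) = Q v + 2*t*(\<Sum>s\<in>PP. w s * hr v s) + t^2 * Q w"
proof -
  have "Q (\<lambda>s. v s + t * w s) = (\<Sum>s\<in>PP. v s * hr v s) + t * (\<Sum>s\<in>PP. v s * hr w s)
      + t * (\<Sum>s\<in>PP. w s * hr v s) + t^2 * (\<Sum>s\<in>PP. w s * hr w s)"
    unfolding Q_def hr_lin
    by (simp add: sum.distrib sum_distrib_left algebra_simps power2_eq_square)
  then show ?thesis unfolding Q_def using B_sym[of v w] by simp
qed

lemma nrm_expand: "nrm (\<lambda>s. v s + t * w s) = nrm v + 2*t*(\<Sum>s\<in>PP. w s * v s) + t^2 * nrm w"
  unfolding nrm_def
  by (simp add: sum.distrib sum_distrib_left algebra_simps power2_eq_square)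

lemma L:
  assumes "\<forall>w. \<mu> * nrm w \<le> Q w" "Q v = \<mu> * nrm v"
  shows "\<forall>s\<in>PP. hr v s = \<mu> * v s"
proof -
  have key: "(\<Sum>s\<in>PP. w s * (hr v s - \<mu> * v s)) = 0" for w
  proof -
    have "\<forall>t. 0 \<le> (2*(\<Sum>s\<in>PP. w s * (hr v s - \<mu> * v s)))*t + (Q w - \<mu> * nrm w)*t^2"
    proof
      fix t
      have "0 \<le> Q (\<lambda>s. v s + t * w s) - \<mu> * nrm (\<lambda>s. v s + t * w s)"
        using assms(1) by (simp add: algebra_simps)
      also have "\<dots> = (2*(\<Sum>s\<in>PP. w s * hr v s) - 2*\<mu>*(\<Sum>s\<in>PP. w s * v s))*t + (Q w - \<mu> * nrm w)*t^2"
        unfolding Q_expand nrm_expand using assms(2) by (simp add: algebra_simps)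
      also have "(\<Sum>s\<in>PP. w s * hr v s) - \<mu>*(\<Sum>s\<in>PP. w s * v s) = (\<Sum>s\<in>PP. w s * (hr v s - \<mu> * v s))"
        by (simp add: sum_distrib_left sum_subtractf algebra_simps)
      ultimately show "0 \<le> (2*(\<Sum>s\<in>PP. w s * (hr v s - \<mu> * v s)))*t + (Q w - \<mu> * nrm w)*t^2"
        by (simp add: algebra_simps)
    qed
    from quad[OF this] show ?thesis by simp
  qed
  from key[of "\<lambda>s. hr v s - \<mu> * v s"] have "(\<Sum>s\<in>PP. (hr v s - \<mu> * v s)^2) = 0"
    by (simp add: power2_eq_square)
  then have "\<forall>s\<in>PP. (hr v s - \<mu> * v s)^2 = 0"
    by (subst (asm) sum_nonneg_eq_0_iff) (auto simp: PP_def)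
  then show ?thesis by simp
qed

lemma nrm_nonneg: "0 \<le> nrm f" unfolding nrm_def by (simp add: sum_nonneg)

lemma finPP: "finite PP" unfolding PP_def by simp

lemma Q_cong: assumes "\<forall>s\<in>PP. f s = g s" shows "Q f = Q g"
proof -
  have "hr f s = hr g s" if "s \<in> PP" for s
  proof -
    have "f (flip i s) = g (flip i s)" if "i \<in> {1..N}" for i
      using assms flip_Pow[OF that, of s] \<open>s \<in> PP\<close> unfolding PP_def by auto
    then show ?thesis unfolding hr_def using assms that by simp
  qed
  then show ?thesis unfolding Q_def using assms by simp
qed

lemma nrm_cong: assumes "\<forall>s\<in>PP. f s = g s" shows "nrm f = nrm g"
  unfolding nrm_def using assms by simp

lemma Q_scale: "Q (\<lambda>s. a * f s) = a^2 * Q f"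
  unfolding Q_def hr_def by (simp add: sum_distrib_left algebra_simps power2_eq_square)

lemma nrm_scale: "nrm (\<lambda>s. a * f s) = a^2 * nrm f"
  unfolding nrm_def by (simp add: sum_distrib_left algebra_simps power2_eq_square)

lemma ham_real:
  assumes "\<forall>s. s \<notin> PP \<longrightarrow> v s = 0"
  shows "ham N \<Omega> \<delta> J (\<lambda>s. complex_of_real (v s)) s = complex_of_real (if s \<in> PP then hr v s else 0)"
  unfolding ham_def hr_def dg_def PP_def by simp

lemma var:
  assumes gs: "\<forall>\<phi>\<in>qvec N. \<forall>\<mu>::complex. \<phi> \<noteq> (\<lambda>_. 0) \<and> ham N \<Omega> \<delta> J \<phi> = (\<lambda>s. \<mu> * \<phi> s) \<longrightarrow> E \<le> Re \<mu>"
  shows "E * nrm f \<le> Q f"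
proof -
  define C where "C s = (if s \<in> PP then {-1..1} else {0::real})" for s
  define K where "K = Pi UNIV C \<inter> {f. nrm f = 1}"
  have "compactin (product_topology (\<lambda>_. euclidean) UNIV) (PiE UNIV C)"
    by (simp add: compactin_PiE C_def)
  then have c1: "compact (Pi UNIV C)"
    using euclidean_product_topology PiE_UNIV_domain by (metis compactin_euclidean_iff)
  have c2: "closed {f. nrm f = 1}"
  proof (rule closed_Collect_eq)
    show "continuous_on UNIV nrm" unfolding nrm_def by (intro continuous_intros; rule coord_cont)
  qed (rule continuous_on_const)
  have cK: "compact K" unfolding K_def using c1 c2 by blast
  define e :: "nat set \<Rightarrow> real" where "e s = (if s = {} then 1 else 0)" for s
  have "nrm e = 1"
  proof -
    have "nrm e = (\<Sum>s\<in>PP. (if s = {} then 1 else 0))"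
      unfolding nrm_def e_def by (rule sum.cong) auto
    also have "\<dots> = 1" using finPP by (simp add: PP_def)
    finally show ?thesis .
  qed
  moreover have "e \<in> Pi UNIV C" unfolding e_def C_def PP_def by auto
  ultimately have neK: "K \<noteq> {}" unfolding K_def by blast
  have cQ: "continuous_on K Q"
    unfolding Q_def hr_def by (intro continuous_intros; rule coord_cont)
  obtain v0 where v0K: "v0 \<in> K" and v0min: "\<forall>y\<in>K. Q v0 \<le> Q y"
    using continuous_attains_inf[OF cK neK cQ] by blast
  define \<mu>0 where "\<mu>0 = Q v0"
  have nv0: "nrm v0 = 1" using v0K unfolding K_def by simp
  have v0out: "\<forall>s. s \<notin> PP \<longrightarrow> v0 s = 0"
  proof (intro allI impI)
    fix s assume "s \<notin> PP"
    moreover have "v0 s \<in> C s" using v0K unfolding K_def by auto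
    ultimately show "v0 s = 0" unfolding C_def by simp
  qed
  have all: "\<forall>w. \<mu>0 * nrm w \<le> Q w"
  proof
    fix w
    show "\<mu>0 * nrm w \<le> Q w"
    proof (cases "nrm w = 0")
      case True
      then have "\<forall>s\<in>PP. (w s)^2 = 0" unfolding nrm_def
        by (subst (asm) sum_nonneg_eq_0_iff) (auto simp: finPP)
      then have "\<forall>s\<in>PP. w s = (\<lambda>_. 0) s" by simp
      then have "Q w = Q (\<lambda>_. 0)" by (rule Q_cong)
      then show ?thesis using True by (simp add: Q_def hr_def)
    next
      case False
      then have np: "nrm w > 0" using nrm_nonneg[of w] by simp
      define c where "c = sqrt (nrm w)"
      have cp: "c > 0" using np unfolding c_def by simp
      have c2: "c^2 = nrm w" unfolding c_def using np by simp
      define w' where "w' s = (if s \<in> PP then (1/c) * w s else 0)" for s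
      have eqw: "\<forall>s\<in>PP. w' s = (1/c) * w s" unfolding w'_def by simp
      have Qw': "Q w' = Q w / nrm w"
        using Q_cong[OF eqw] Q_scale[of "1/c" w] c2 by (simp add: power_divide)
      have nw': "nrm w' = 1"
        using nrm_cong[OF eqw] nrm_scale[of "1/c" w] c2 np by (simp add: power_divide)
      have "w' \<in> Pi UNIV C"
      proof -
        have "-1 \<le> (1/c) * w s \<and> (1/c) * w s \<le> 1" if "s \<in> PP" for s
        proof -
          have "(w s)^2 \<le> nrm w" unfolding nrm_def
            by (rule member_le_sum[where f="\<lambda>s. (w s)^2"]) (auto simp: that finPP)
          then have "\<bar>w s\<bar> \<le> c" unfolding c_def by (simp add: real_le_rsqrt)
          then have "\<bar>(1/c) * w s\<bar> \<le> 1" using cp by (simp add: abs_mult divide_simps)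
          then show ?thesis by (smt (verit))
        qed
        then show ?thesis unfolding w'_def C_def by auto
      qed
      then have "w' \<in> K" using nw' unfolding K_def by simp
      then have "\<mu>0 \<le> Q w / nrm w" using v0min Qw' unfolding \<mu>0_def by metis
      then show ?thesis using np by (simp add: field_simps)
    qed
  qed
  have eig: "\<forall>s\<in>PP. hr v0 s = \<mu>0 * v0 s"
    using L[OF all] nv0 unfolding \<mu>0_def by simp
  define \<psi>0 where "\<psi>0 s = complex_of_real (v0 s)" for s
  have "\<psi>0 \<in> qvec N" using v0out unfolding qvec_def \<psi>0_def PP_def by auto
  moreover have "\<psi>0 \<noteq> (\<lambda>_. 0)"
  proof
    assume "\<psi>0 = (\<lambda>_. 0)"
    then have "\<forall>s. v0 s = 0" unfolding \<psi>0_def by (metis of_real_eq_0_iff)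
    then show False using nv0 unfolding nrm_def by simp
  qed
  moreover have "ham N \<Omega> \<delta> J \<psi>0 = (\<lambda>s. complex_of_real \<mu>0 * \<psi>0 s)"
  proof
    fix s
    show "ham N \<Omega> \<delta> J \<psi>0 s = complex_of_real \<mu>0 * \<psi>0 s"
      unfolding \<psi>0_def ham_real[OF v0out] using eig v0out by auto
  qed
  ultimately have "E \<le> \<mu>0" using gs by force
  then have "E * nrm f \<le> \<mu>0 * nrm f" using nrm_nonneg by (simp add: mult_right_mono)
  also have "\<dots> \<le> Q f" using all by simp
  finally show ?thesis .
qed

lemma ham_eq: "s \<in> PP \<Longrightarrow> ham N \<Omega> \<delta> J \<psi> s
   = complex_of_real \<Omega> * (\<Sum>i=1..N. \<psi> (flip i s)) + complex_of_real (dg s) * \<psi> s"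
  unfolding ham_def dg_def PP_def by simp

definition sg :: "nat set \<Rightarrow> real" where
  "sg s = (if \<Omega> < 0 then 1 else (-1)^card s)"

lemma sg_sq: "sg s * sg s = 1"
  unfolding sg_def by (cases "even (card s)") simp_all

lemma sg_flip:
  assumes "s \<in> PP" "i \<in> {1..N}"
  shows "sg (flip i s) = sg s * (if \<Omega> < 0 then 1 else -1)"
proof -
  have fin: "finite s" using assms(1) unfolding PP_def by (auto intro: finite_subset)
  show ?thesis
  proof (cases "i \<in> s")
    case True
    have "card s = Suc (card (s - {i}))" using fin True by (rule card.remove)
    then have "(-1::real)^card s = - ((-1)^card (s - {i}))" by (simp only: power_Suc mult_minus1)
    then show ?thesis using True unfolding sg_def flip_def by simp
  next
    case False
    then have "card (insert i s) = Suc (card s)" using fin by simp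
    then have "(-1::real)^card (insert i s) = - ((-1)^card s)" by (simp only: power_Suc mult_minus1)
    then show ?thesis using False unfolding sg_def flip_def by simp
  qed
qed

lemma sg_prod: "s \<in> PP \<Longrightarrow> i \<in> {1..N} \<Longrightarrow> \<Omega> * (sg s * sg (flip i s)) = - \<bar>\<Omega>\<bar>"
proof -
  assume a: "s \<in> PP" "i \<in> {1..N}"
  have "sg s * sg (flip i s) = (sg s * sg s) * (if \<Omega> < 0 then 1 else -1)"
    unfolding sg_flip[OF a] by (simp only: mult.assoc)
  then have "sg s * sg (flip i s) = (if \<Omega> < 0 then 1 else -1)" unfolding sg_sq by simp
  then show ?thesis by (cases "\<Omega> < 0") auto
qed

lemma nonzero:
  assumes "\<Omega> \<noteq> 0" and gs: "ground_state N (ham N \<Omega> \<delta> J) \<psi>"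
  shows "\<forall>s\<in>PP. \<psi> s \<noteq> 0"
proof -
  obtain E where q: "\<psi> \<in> qvec N" and nz: "\<psi> \<noteq> (\<lambda>_. 0)"
    and eig: "ham N \<Omega> \<delta> J \<psi> = (\<lambda>s. complex_of_real E * \<psi> s)"
    and mn: "\<forall>\<phi>\<in>qvec N. \<forall>\<mu>::complex. \<phi> \<noteq> (\<lambda>_. 0) \<and> ham N \<Omega> \<delta> J \<phi> = (\<lambda>s. \<mu> * \<phi> s) \<longrightarrow> E \<le> Re \<mu>"
    using gs unfolding ground_state_def by blast
  define \<phi> where "\<phi> s = sg s * cmod (\<psi> s)" for s
  have pers: "\<phi> s * hr \<phi> s \<le> E * (\<phi> s)^2" if sP: "s \<in> PP" for s
  proof -
    have e1: "complex_of_real \<Omega> * (\<Sum>i=1..N. \<psi> (flip i s)) + complex_of_real (dg s) * \<psi> s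
        = complex_of_real E * \<psi> s"
      using fun_cong[OF eig, of s] ham_eq[OF sP] by simp
    have "Re (cnj (\<psi> s) * (complex_of_real \<Omega> * (\<Sum>i=1..N. \<psi> (flip i s)) + complex_of_real (dg s) * \<psi> s))
       = Re (cnj (\<psi> s) * (complex_of_real E * \<psi> s))" using e1 by simp
    moreover have cm: "(cmod (\<psi> s))^2 = Re (\<psi> s) * Re (\<psi> s) + Im (\<psi> s) * Im (\<psi> s)"
      by (metis cmod_power2 power2_eq_square)
    ultimately have e2: "\<Omega> * (\<Sum>i=1..N. Re (cnj (\<psi> s) * \<psi> (flip i s))) + dg s * (cmod (\<psi> s))^2
       = E * (cmod (\<psi> s))^2"
      unfolding cm by (simp add: distrib_left sum_distrib_left Re_sum algebra_simps)
    have "\<phi> s * hr \<phi> s = (\<Sum>i=1..N. \<Omega> * (sg s * sg (flip i s)) * (cmod (\<psi> s) * cmod (\<psi> (flip i s))))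
          + dg s * (sg s * sg s) * (cmod (\<psi> s))^2"
      unfolding hr_def \<phi>_def by (simp add: sum_distrib_left algebra_simps power2_eq_square)
    also have "\<dots> = (\<Sum>i=1..N. - \<bar>\<Omega>\<bar> * (cmod (\<psi> s) * cmod (\<psi> (flip i s))))
          + dg s * (cmod (\<psi> s))^2"
      using sg_prod[OF sP] sg_sq[of s] by simp
    also have "\<dots> \<le> \<Omega> * (\<Sum>i=1..N. Re (cnj (\<psi> s) * \<psi> (flip i s))) + dg s * (cmod (\<psi> s))^2"
    proof -
      have "- \<bar>\<Omega>\<bar> * (cmod (\<psi> s) * cmod (\<psi> (flip i s))) \<le> \<Omega> * Re (cnj (\<psi> s) * \<psi> (flip i s))" for i
      proof -
        have "\<bar>\<Omega> * Re (cnj (\<psi> s) * \<psi> (flip i s))\<bar> \<le> \<bar>\<Omega>\<bar> * (cmod (\<psi> s) * cmod (\<psi> (flip i s)))"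
          unfolding abs_mult
        proof (rule mult_left_mono)
          show "\<bar>Re (cnj (\<psi> s) * \<psi> (flip i s))\<bar> \<le> cmod (\<psi> s) * cmod (\<psi> (flip i s))"
            by (metis abs_Re_le_cmod complex_mod_cnj norm_mult)
        qed simp
        then show ?thesis by linarith
      qed
      then show ?thesis by (simp add: sum_distrib_left sum_mono)
    qed
    also have "\<dots> = E * (\<phi> s)^2" using e2 sg_sq[of s] unfolding \<phi>_def
      by (simp add: power_mult_distrib power2_eq_square)
    finally show ?thesis .
  qed
  have "Q \<phi> \<le> E * nrm \<phi>" unfolding Q_def nrm_def sum_distrib_left
    using pers by (intro sum_mono) simp
  moreover have "E * nrm \<phi> \<le> Q \<phi>" by (rule var[OF mn])
  ultimately have "Q \<phi> = E * nrm \<phi>" by simp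
  then have hrE: "\<forall>s\<in>PP. hr \<phi> s = E * \<phi> s"
    using L[of E \<phi>] var[OF mn] by blast
  have propg: "\<psi> (flip i s) = 0" if sP: "s \<in> PP" and z: "\<psi> s = 0" and i: "i \<in> {1..N}" for s i
  proof -
    define c where "c = (if \<Omega> < 0 then 1 else -1::real)"
    have "\<phi> s = 0" using z unfolding \<phi>_def by simp
    moreover have "hr \<phi> s = E * \<phi> s" using hrE sP by blast
    ultimately have "\<Omega> * (\<Sum>i=1..N. \<phi> (flip i s)) = 0" unfolding hr_def by simp
    then have "(\<Sum>i=1..N. \<phi> (flip i s)) = 0" using assms(1) by simp
    moreover have "\<phi> (flip j s) = (sg s * c) * cmod (\<psi> (flip j s))" if "j \<in> {1..N}" for j
      unfolding \<phi>_def c_def using sg_flip[OF sP that] by simp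
    ultimately have "(sg s * c) * (\<Sum>j=1..N. cmod (\<psi> (flip j s))) = 0"
      by (simp add: sum_distrib_left)
    moreover have "sg s * c \<noteq> 0" using sg_sq[of s] unfolding c_def by auto
    ultimately have "(\<Sum>j=1..N. cmod (\<psi> (flip j s))) = 0" by simp
    then have "\<forall>j\<in>{1..N}. cmod (\<psi> (flip j s)) = 0"
      by (subst (asm) sum_nonneg_eq_0_iff) auto
    then show ?thesis using i by simp
  qed
  show ?thesis
  proof (rule ccontr)
    assume "\<not> (\<forall>s\<in>PP. \<psi> s \<noteq> 0)"
    then obtain s0 where s0: "s0 \<in> PP" "\<psi> s0 = 0" by blast
    have down: "\<psi> {} = 0" if "s \<in> PP" "\<psi> s = 0" for s
      using that
    proof (induction "card s" arbitrary: s)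
      case 0
      then have "finite s" unfolding PP_def by (auto intro: finite_subset)
      then have "s = {}" using 0 by simp
      then show ?case using 0 by simp
    next
      case (Suc n)
      then obtain i where i: "i \<in> s" by fastforce
      have iN: "i \<in> {1..N}" using Suc.prems i unfolding PP_def by auto
      have fl: "flip i s = s - {i}" using i unfolding flip_def by simp
      have fin: "finite s" using Suc.prems unfolding PP_def by (auto intro: finite_subset)
      have "\<psi> (flip i s) = 0" using propg Suc.prems iN by blast
      moreover have "flip i s \<in> PP" using Suc.prems flip_Pow[OF iN] unfolding PP_def by auto
      moreover have "n = card (flip i s)" using Suc.hyps(2) fl fin i by simp
      ultimately show ?case using Suc.hyps(1) by blast
    qed
    have up: "\<psi> t = 0" if "t \<subseteq> {1..N}" for t
    proof -
      have "finite t" using that by (auto intro: finite_subset)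
      then show ?thesis using that
      proof (induction t rule: finite_induct)
        case empty
        then show ?case using down s0 by blast
      next
        case (insert i t)
        have iN: "i \<in> {1..N}" using insert.prems by auto
        have "\<psi> t = 0" using insert by auto
        moreover have "t \<in> PP" using insert.prems unfolding PP_def by auto
        moreover have "flip i t = insert i t" using insert.hyps(2) unfolding flip_def by simp
        ultimately show ?case using propg iN by metis
      qed
    qed
    have "\<psi> = (\<lambda>_. 0)"
    proof
      fix t show "\<psi> t = 0"
        using up q unfolding qvec_def by (cases "t \<subseteq> {1..N}") auto
    qed
    then show False using nz by simp
  qed
qed

end


lemma zz_comb:
  assumes "a < b" "i < j"
  shows "zval {} i * zval {} j - zval {a} i * zval {a} j - zval {b} i * zval {b} j
         + zval {a,b} i * zval {a,b} j = (if i = a \<and> j = b then 4 else 0)"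
  using assms unfolding zval_def by auto

lemma const_imp_zero:
  fixes K :: "nat \<Rightarrow> nat \<Rightarrow> real"
  assumes c: "\<forall>s \<in> Pow {1..N}. (\<Sum>i=1..N. \<Sum>j=i+1..N. K i j * zval s i * zval s j) = c"
    and ab: "1 \<le> a" "a < b" "b \<le> N"
  shows "K a b = 0"
proof -
  define D where "D s = (\<Sum>i=1..N. \<Sum>j=i+1..N. K i j * zval s i * zval s j)" for s
  have "D {} - D {a} - D {b} + D {a,b} = 0" using c ab unfolding D_def by auto
  moreover have "D {} - D {a} - D {b} + D {a,b}
      = (\<Sum>i=1..N. \<Sum>j=i+1..N. K i j * (zval {} i * zval {} j - zval {a} i * zval {a} j - zval {b} i * zval {b} j
         + zval {a,b} i * zval {a,b} j))"
    unfolding D_def by (simp add: sum.distrib sum_subtractf algebra_simps)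
  also have "\<dots> = (\<Sum>i=1..N. \<Sum>j=i+1..N. K i j * (if i = a \<and> j = b then 4 else 0))"
    using ab by (intro sum.cong refl) (simp add: zz_comb)
  also have "\<dots> = (\<Sum>i=1..N. if i = a then 4 * K a b else 0)"
  proof (rule sum.cong[OF refl])
    fix i assume i: "i \<in> {1..N}"
    show "(\<Sum>j=i+1..N. K i j * (if i = a \<and> j = b then 4 else 0)) = (if i = a then 4 * K a b else 0)"
    proof (cases "i = a")
      case True
      have "(\<Sum>j=i+1..N. K i j * (if i = a \<and> j = b then 4 else 0)) = (\<Sum>j=i+1..N. if j = b then 4 * K a b else 0)"
        using True by (intro sum.cong refl) auto
      also have "\<dots> = 4 * K a b" using True ab by simp
      finally show ?thesis using True by simp
    qed simp
  qed
  also have "\<dots> = 4 * K a b" using ab by simp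
  finally show ?thesis by simp
qed

theorem mainTheorem3:
  fixes N :: nat and \<Omega> \<delta> :: real and J1 J2 :: "nat \<Rightarrow> nat \<Rightarrow> real"
  assumes "N \<ge> 2" and "\<Omega> \<noteq> 0"
    and "\<exists>i j. 1 \<le> i \<and> i < j \<and> j \<le> N \<and> J1 i j \<noteq> J2 i j"
  shows "\<not> (\<exists>\<psi>. ground_state N (ham N \<Omega> \<delta> J1) \<psi> \<and> ground_state N (ham N \<Omega> \<delta> J2) \<psi>)"
proof
  assume "\<exists>\<psi>. ground_state N (ham N \<Omega> \<delta> J1) \<psi> \<and> ground_state N (ham N \<Omega> \<delta> J2) \<psi>"
  then obtain \<psi> where g1: "ground_state N (ham N \<Omega> \<delta> J1) \<psi>" and g2: "ground_state N (ham N \<Omega> \<delta> J2) \<psi>" by blast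
  obtain E1 where e1: "ham N \<Omega> \<delta> J1 \<psi> = (\<lambda>s. complex_of_real E1 * \<psi> s)"
    using g1 unfolding ground_state_def by blast
  obtain E2 where e2: "ham N \<Omega> \<delta> J2 \<psi> = (\<lambda>s. complex_of_real E2 * \<psi> s)"
    using g2 unfolding ground_state_def by blast
  have nz: "\<forall>s\<in>Pow {1..N}. \<psi> s \<noteq> 0" using nonzero[OF assms(2) g1] unfolding PP_def .
  define K where "K i j = J1 i j - J2 i j" for i j
  have cst: "\<forall>s \<in> Pow {1..N}. (\<Sum>i=1..N. \<Sum>j=i+1..N. K i j * zval s i * zval s j) = E1 - E2"
  proof
    fix s assume sP: "s \<in> Pow {1..N}"
    have "ham N \<Omega> \<delta> J1 \<psi> s - ham N \<Omega> \<delta> J2 \<psi> s = complex_of_real (E1 - E2) * \<psi> s"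
      using fun_cong[OF e1, of s] fun_cong[OF e2, of s] by (simp add: algebra_simps)
    moreover have "ham N \<Omega> \<delta> J1 \<psi> s - ham N \<Omega> \<delta> J2 \<psi> s
       = complex_of_real (\<Sum>i=1..N. \<Sum>j=i+1..N. K i j * zval s i * zval s j) * \<psi> s"
    proof -
      define d1 where "d1 = \<delta> * (\<Sum>i=1..N. zval s i) + (\<Sum>i=1..N. \<Sum>j=i+1..N. J1 i j * zval s i * zval s j)"
      define d2 where "d2 = \<delta> * (\<Sum>i=1..N. zval s i) + (\<Sum>i=1..N. \<Sum>j=i+1..N. J2 i j * zval s i * zval s j)"
      have h1: "ham N \<Omega> \<delta> J1 \<psi> s = complex_of_real \<Omega> * (\<Sum>i=1..N. \<psi> (flip i s)) + complex_of_real d1 * \<psi> s"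
        unfolding d1_def by (rule ham_eq[unfolded PP_def dg_def, OF sP])
      have h2: "ham N \<Omega> \<delta> J2 \<psi> s = complex_of_real \<Omega> * (\<Sum>i=1..N. \<psi> (flip i s)) + complex_of_real d2 * \<psi> s"
        unfolding d2_def by (rule ham_eq[unfolded PP_def dg_def, OF sP])
      have d: "d1 - d2 = (\<Sum>i=1..N. \<Sum>j=i+1..N. K i j * zval s i * zval s j)"
        unfolding d1_def d2_def K_def by (simp add: sum_subtractf algebra_simps)
      show ?thesis unfolding h1 h2 d[symmetric] of_real_diff by (simp add: algebra_simps)
    qed
    ultimately have "complex_of_real (\<Sum>i=1..N. \<Sum>j=i+1..N. K i j * zval s i * zval s j) * \<psi> s
        = complex_of_real (E1 - E2) * \<psi> s" by (metis (no_types))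
    moreover have "\<psi> s \<noteq> 0" using nz sP by blast
    ultimately have "complex_of_real (\<Sum>i=1..N. \<Sum>j=i+1..N. K i j * zval s i * zval s j) = complex_of_real (E1 - E2)"
      by (simp only: mult_cancel_right) simp
    then show "(\<Sum>i=1..N. \<Sum>j=i+1..N. K i j * zval s i * zval s j) = E1 - E2"
      by (simp only: of_real_eq_iff)
  qed
  obtain a b where ab: "1 \<le> a" "a < b" "b \<le> N" "J1 a b \<noteq> J2 a b" using assms(3) by blast
  have "K a b = 0" by (rule const_imp_zero[OF cst ab(1-3)])
  then show False using ab(4) unfolding K_def by simp
qed

end
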